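(* Let $A\in\mathbb{R}^{n\times n}$, $C\in\mathbb{R}^{q\times n}$, $F\in\mathbb{R}^{n\times q}$, $c>0$, let $L=(l_{ij})\in\mathbb{R}^{m\times m}$ be irreducible with $\mathrm{Rank}(L)=m-1$, $l_{ij}\ge0$ for $i\ne j$, $\sum_jl_{ij}=0$, let $\varepsilon>0$ and let $\tilde L=(\tilde l_{ij})$ be $L$ with $l_{11}$ replaced by $l_{11}-\varepsilon$. Let $0>\lambda_1\ge\dots\ge\lambda_m$ be the eigenvalues of $\tilde L$. Suppose either (1) all variational equations $\frac{dz(t)}{dt}=[A+c\lambda_kFC]z(t)$, $k=1,\dots,m$, are exponentially stable; or (2) there exist a positive definite $P$ and $\epsilon>0$ with $\{P(A+c\lambda_kFC)\}^s<-\epsilon I_n$, $k=1,\dots,m$. Then $0$ is exponentially stable for the coupled system $$\dot x_i(t)=Ax_i(t)+c\sum_{j=1}^m\tilde l_{ij}FCx_j(t),\qquad i=1,\dots,m.$$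
   Context: For a square matrix $M$, $\{M\}^s=\frac12(M+M^T)$; $M<-\epsilon I$ means $M+\epsilon I$ is negative definite. *)

theory Defs
  imports "HOL-Analysis.Analysis"
begin

text \<open>Irreducible square matrix: there is no nonempty proper index set I
  that is closed in the sense l_ij = 0 for all i in I, j not in I
  (equivalently, L is not permutation-similar to a block triangular matrix).\<close>
definition irreducible_mat :: "real^'m^'m \<Rightarrow> bool" where
  "irreducible_mat L \<longleftrightarrow>
     \<not> (\<exists>I. I \<noteq> {} \<and> I \<noteq> UNIV \<and> (\<forall>i\<in>I. \<forall>j. j \<notin> I \<longrightarrow> L $ i $ j = 0))"

definition sym_part :: "real^'n^'n \<Rightarrow> real^'n^'n" where
  "sym_part M = (1/2) *\<^sub>R (M + transpose M)"

definition pos_def :: "real^'n^'n \<Rightarrow> bool" where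
  "pos_def P \<longleftrightarrow> transpose P = P \<and> (\<forall>x. x \<noteq> 0 \<longrightarrow> x \<bullet> (P *v x) > 0)"

definition neg_def :: "real^'n^'n \<Rightarrow> bool" where
  "neg_def M \<longleftrightarrow> transpose M = M \<and> (\<forall>x. x \<noteq> 0 \<longrightarrow> x \<bullet> (M *v x) < 0)"

definition exp_stable :: "('v::real_normed_vector \<Rightarrow> 'v) \<Rightarrow> bool" where
  "exp_stable f \<longleftrightarrow> (\<exists>K \<alpha>. K > 0 \<and> \<alpha> > 0 \<and>
     (\<forall>x::real \<Rightarrow> 'v.
        (\<forall>t\<ge>0. (x has_vector_derivative f (x t)) (at t within {0..})) \<longrightarrow>
        (\<forall>t\<ge>0. norm (x t) \<le> K * exp (- \<alpha> * t) * norm (x 0))))"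

definition coupled_rhs ::
  "real^'n^'n \<Rightarrow> real^'q^'n \<Rightarrow> real^'n^'q \<Rightarrow> real \<Rightarrow> real^'m^'m \<Rightarrow> real^'n^'m \<Rightarrow> real^'n^'m" where
  "coupled_rhs A F C c Lt X =
     (\<chi> i. A *v (X $ i) + c *\<^sub>R (\<Sum>j\<in>UNIV. (Lt $ i $ j) *\<^sub>R (F *v (C *v (X $ j)))))"

end

theory Submission
  imports Defs "Jordan_Normal_Form.Schur_Decomposition"
begin

hide_const (open) Matrix.mat Determinant.det Matrix.vec
no_notation vec_index (infixl "$" 100)
no_notation scalar_prod (infix "\<bullet>" 70)

section \<open>Triangularization via Schur decomposition\<close>

lemma det_vec_to_mat:
  fixes N :: "'a::comm_ring_1^'m^'m" and g :: "nat \<Rightarrow> 'm"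
  assumes g: "bij_betw g {0..<CARD('m)} UNIV"
  shows "Determinant.det (Matrix.mat CARD('m) CARD('m) (\<lambda>(i,j). N $ g i $ g j)) = det N"
proof -
  let ?n = "CARD('m)"
  let ?Phi = "\<lambda>q x. if x \<in> UNIV then g (q (inv_into {0..<?n} g x)) else x"
  have bij: "bij_betw ?Phi {q. q permutes {0..<?n}} {p. p permutes (UNIV::'m set)}"
    by (rule bij_betw_permutations[OF g])
  have inj: "inj_on g {0..<?n}" using g by (simp add: bij_betw_def)
  have "det N = (\<Sum>p\<in>{p. p permutes (UNIV::'m set)}. of_int (sign p) * (\<Prod>i\<in>UNIV. N $ i $ p i))"
    by (simp add: Determinants.det_def)
  also have "\<dots> = (\<Sum>q\<in>{q. q permutes {0..<?n}}. of_int (sign (?Phi q)) * (\<Prod>i\<in>UNIV. N $ i $ ?Phi q i))"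
    by (rule sum.reindex_bij_betw[OF bij, symmetric])
  also have "\<dots> = (\<Sum>q\<in>{q. q permutes {0..<?n}}. of_int (sign q) * (\<Prod>i=0..<?n. N $ g i $ g (q i)))"
  proof (rule sum.cong[OF refl])
    fix q assume q: "q \<in> {q. q permutes {0..<?n}}"
    have e1: "?Phi q = map_permutation {0..<?n} g q"
      using g by (auto simp: map_permutation_def restrict_id_def bij_betw_def fun_eq_iff)
    have s: "sign (?Phi q) = sign q"
      unfolding e1 by (rule sign_map_permutation[OF inj]) (use q in auto)
    have "(\<Prod>i\<in>UNIV. N $ i $ ?Phi q i) = (\<Prod>i=0..<?n. N $ g i $ ?Phi q (g i))"
      by (rule prod.reindex_bij_betw[OF g, symmetric])
    also have "\<dots> = (\<Prod>i=0..<?n. N $ g i $ g (q i))"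
      by (rule prod.cong[OF refl]) (simp add: inv_into_f_f[OF inj])
    finally show "of_int (sign (?Phi q)) * (\<Prod>i\<in>UNIV. N $ i $ ?Phi q i) = of_int (sign q) * (\<Prod>i=0..<?n. N $ g i $ g (q i))"
      using s by simp
  qed
  also have "\<dots> = Determinant.det (Matrix.mat ?n ?n (\<lambda>(i,j). N $ g i $ g j))"
    by (subst det_def'[of _ ?n]) (auto intro!: sum.cong prod.cong simp: permutes_def)
  finally show ?thesis by simp
qed

lemma mult_mat_entry:
  fixes A B :: "'a::comm_ring_1 mat"
  assumes "A \<in> carrier_mat n n" "B \<in> carrier_mat n n" "i < n" "j < n"
  shows "(A * B) $$ (i,j) = (\<Sum>l<n. A $$ (i,l) * B $$ (l,j))"
  using assms by (auto simp: scalar_prod_def atLeast0LessThan intro!: sum.cong)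

lemma triang_exists:
  fixes Lt :: "real^'m^'m" and lam :: "nat \<Rightarrow> real"
  assumes lam_eig: "\<forall>x::real. det (x *\<^sub>R mat 1 - Lt) = (\<Prod>k\<in>{1..CARD('m)}. (x - lam k))"
  shows "\<exists>W V b. (\<forall>k<CARD('m). \<forall>j. (\<Sum>i\<in>UNIV. W k i * Lt$i$j) = (\<Sum>l<CARD('m). b k l * W l j))
     \<and> (\<forall>k<CARD('m). \<forall>l<k. b k l = 0) \<and> (\<forall>k<CARD('m). b k k \<in> lam ` {1..CARD('m)})
     \<and> (\<forall>i j. (\<Sum>k<CARD('m). V i k * W k j) = (if i = j then 1 else 0))"
proof -
  let ?n = "CARD('m)"
  obtain h :: "'m \<Rightarrow> nat" where h: "bij_betw h UNIV {0..<?n}"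
    using ex_bij_betw_finite_nat[of "UNIV::'m set"] by auto
  define g where "g = inv_into UNIV h"
  have g: "bij_betw g {0..<?n} UNIV" unfolding g_def by (rule bij_betw_inv_into[OF h])
  have hg: "h (g i) = i" if "i < ?n" for i
    unfolding g_def using h that by (auto simp: bij_betw_def f_inv_into_f)
  have gh: "g (h i) = i" for i
    unfolding g_def using h by (auto simp: bij_betw_def inv_into_f_f)
  have hlt: "h i < ?n" for i using h by (auto simp: bij_betw_def)
  define M where "M = Matrix.mat ?n ?n (\<lambda>(i,j). Lt $ g i $ g j)"
  have Mc: "M \<in> carrier_mat ?n ?n" unfolding M_def by simp
  define es where "es = map lam [1..<?n+1]"
  have "poly (char_poly M) x = poly (\<Prod>e\<leftarrow>es. [:- e, 1:]) x" for x
  proof -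
    have "- char_matrix M x = Matrix.mat ?n ?n (\<lambda>(i,j). (x *\<^sub>R mat 1 - Lt) $ g i $ g j)"
    proof (rule eq_matI)
      fix i j assume ij: "i < dim_row (Matrix.mat ?n ?n (\<lambda>(i,j). (x *\<^sub>R mat 1 - Lt) $ g i $ g j))"
         "j < dim_col (Matrix.mat ?n ?n (\<lambda>(i,j). (x *\<^sub>R mat 1 - Lt) $ g i $ g j))"
      then have "i < ?n" "j < ?n" by auto
      then have "(g i = g j) = (i = j)" by (metis hg)
      then show "(- char_matrix M x) $$ (i, j) = Matrix.mat ?n ?n (\<lambda>(i,j). (x *\<^sub>R mat 1 - Lt) $ g i $ g j) $$ (i, j)"
        using \<open>i < ?n\<close> \<open>j < ?n\<close> by (simp add: char_matrix_def M_def Finite_Cartesian_Product.mat_def)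
    qed (auto simp: char_matrix_def M_def)
    then have "poly (char_poly M) x = det (x *\<^sub>R mat 1 - Lt)"
      using char_poly_matrix[OF Mc, of x] det_vec_to_mat[OF g, of "x *\<^sub>R mat 1 - Lt"] by metis
    also have "\<dots> = (\<Prod>k\<in>{1..?n}. (x - lam k))" using lam_eig by simp
    also have "\<dots> = poly (\<Prod>e\<leftarrow>es. [:- e, 1:]) x"
    proof -
      have st: "set [1..<?n+1] = {1..?n}" by (simp only: set_upt Suc_eq_plus1[symmetric] atLeastLessThanSuc_atLeastAtMost)
      have "(\<Prod>k\<in>{1..?n}. (x - lam k)) = (\<Prod>k\<leftarrow>[1..<?n+1]. (x - lam k))"
        unfolding st[symmetric] by (rule prod.distinct_set_conv_list) simp
      then show ?thesis by (simp add: es_def poly_prod_list o_def del: upt_Suc)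
    qed
    finally show ?thesis .
  qed
  then have cp: "char_poly M = (\<Prod>e\<leftarrow>es. [:- e, 1:])" by (simp add: poly_eq_poly_eq_iff[symmetric] fun_eq_iff)
  obtain B P Q where sd: "schur_decomposition M es = (B,P,Q)" by (cases "schur_decomposition M es") auto
  from schur_decomposition[OF Mc cp sd]
  have sim: "similar_mat_wit M B P Q" and ut: "upper_triangular B" and dg: "diag_mat B = es" by auto
  from sim have Bc: "B \<in> carrier_mat ?n ?n" and Pc: "P \<in> carrier_mat ?n ?n" and Qc: "Q \<in> carrier_mat ?n ?n"
    and PQ: "P * Q = 1\<^sub>m ?n" and QP: "Q * P = 1\<^sub>m ?n" and MPBQ: "M = P * B * Q"
    using Mc by (auto simp: similar_mat_wit_def Let_def)
  have QM: "Q * M = B * Q"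
  proof -
    have "Q * M = Q * (P * B * Q)" using MPBQ by simp
    also have "\<dots> = (Q * P) * B * Q" using Qc Pc Bc by (simp add: assoc_mult_mat[of _ ?n ?n _ ?n _ ?n])
    also have "\<dots> = B * Q" using QP Bc by simp
    finally show ?thesis .
  qed
  define W where "W = (\<lambda>k i. Q $$ (k, h i))"
  define V where "V = (\<lambda>i k. P $$ (h i, k))"
  define b where "b = (\<lambda>k l. B $$ (k, l))"
  have 1: "(\<Sum>i\<in>UNIV. W k i * Lt$i$j) = (\<Sum>l<?n. b k l * W l j)" if k: "k < ?n" for k j
  proof -
    have "(\<Sum>i\<in>UNIV. W k i * Lt$i$j) = (\<Sum>i\<in>{0..<?n}. W k (g i) * Lt$(g i)$j)"
      by (rule sum.reindex_bij_betw[OF g, symmetric])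
    also have "\<dots> = (\<Sum>i<?n. Q $$ (k,i) * M $$ (i, h j))"
      by (auto simp: W_def M_def hg gh hlt atLeast0LessThan intro!: sum.cong)
    also have "\<dots> = (Q * M) $$ (k, h j)"
      by (rule mult_mat_entry[OF Qc Mc k hlt, symmetric])
    also have "\<dots> = (B * Q) $$ (k, h j)" by (simp add: QM)
    also have "\<dots> = (\<Sum>l<?n. b k l * W l j)"
      by (subst mult_mat_entry[OF Bc Qc k hlt]) (simp add: b_def W_def)
    finally show ?thesis .
  qed
  have 2: "b k l = 0" if "k < ?n" "l < k" for k l
    using ut Bc that by (auto simp: upper_triangular_def b_def)
  have 3: "b k k \<in> lam ` {1..?n}" if "k < ?n" for k
  proof -
    have "b k k = diag_mat B ! k" using Bc that by (simp add: diag_mat_def b_def)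
    also have "\<dots> = lam (k+1)" using dg that by (simp add: es_def nth_map_upt del: upt_Suc)
    finally show ?thesis using that by auto
  qed
  have 4: "(\<Sum>k<?n. V i k * W k j) = (if i = j then 1 else 0)" for i j
  proof -
    have "(\<Sum>k<?n. V i k * W k j) = (P * Q) $$ (h i, h j)"
      by (subst mult_mat_entry[OF Pc Qc hlt hlt]) (simp add: V_def W_def)
    also have "\<dots> = (if i = j then 1 else 0)" using PQ hlt by (simp, metis gh)
    finally show ?thesis .
  qed
  show ?thesis using 1 2 3 4 by blast
qed


section \<open>Linear ODE facts\<close>

lemma vec_expand: "(x::real^'n) = (\<Sum>i\<in>UNIV. (x$i) *\<^sub>R axis i 1)"
proof -
  have "(\<Sum>i\<in>UNIV. (x$i) *\<^sub>R axis i (1::real)) $ j = x $ j" for j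
    by (simp add: axis_def if_distrib cong: if_cong)
  then show ?thesis by (simp add: Finite_Cartesian_Product.vec_eq_iff)
qed

lemma vec_has_vector_derivative:
  fixes f :: "real \<Rightarrow> real^'n"
  assumes "\<And>i. ((\<lambda>t. f t $ i) has_real_derivative f' $ i) F"
  shows "(f has_vector_derivative f') F"
proof -
  have H: "((\<lambda>t. \<Sum>i\<in>UNIV. (f t $ i) *\<^sub>R axis i 1) has_vector_derivative (\<Sum>i\<in>UNIV. (f' $ i) *\<^sub>R axis i (1::real))) F"
    by (intro has_vector_derivative_sum bounded_linear.has_vector_derivative[OF bounded_linear_scaleR_left])
       (use assms in \<open>simp add: has_real_derivative_iff_has_vector_derivative\<close>)
  have e1: "(\<lambda>t. \<Sum>i\<in>UNIV. (f t $ i) *\<^sub>R axis i (1::real)) = f" by (rule ext, rule vec_expand[symmetric])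
  have e2: "(\<Sum>i\<in>UNIV. (f' $ i) *\<^sub>R axis i (1::real)) = f'" by (rule vec_expand[symmetric])
  show ?thesis using H unfolding e1 e2 .
qed

lemma vec_has_vector_derivative_nth:
  fixes f :: "real \<Rightarrow> real^'n"
  assumes "(f has_vector_derivative f') F"
  shows "((\<lambda>t. f t $ i) has_real_derivative f' $ i) F"
  using bounded_linear.has_vector_derivative[OF bounded_linear_vec_nth assms, of i]
  by (simp add: has_real_derivative_iff_has_vector_derivative)

primrec mpow :: "real^'n^'n \<Rightarrow> nat \<Rightarrow> real^'n^'n" where
  "mpow D 0 = mat 1" | "mpow D (Suc k) = D ** mpow D k"

lemma mpow_Suc': "mpow D (Suc k) = mpow D k ** D"
  by (induction k) (simp_all add: matrix_mul_assoc)

lemma mpow_bound: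
  fixes D :: "real^'n^'n"
  defines "B \<equiv> (\<Sum>i\<in>UNIV. \<Sum>j\<in>UNIV. \<bar>D$i$j\<bar>) + 1"
  shows "\<bar>mpow D k $ i $ j\<bar> \<le> B ^ k"
proof (induction k arbitrary: i j)
  case 0
  then show ?case by (simp add: Finite_Cartesian_Product.mat_def)
next
  case (Suc k)
  have B0: "B \<ge> 0" unfolding B_def by (simp add: sum_nonneg)
  have rowb: "(\<Sum>l\<in>UNIV. \<bar>D$i$l\<bar>) \<le> B"
  proof -
    have "(\<Sum>l\<in>UNIV. \<bar>D$i$l\<bar>) \<le> (\<Sum>i\<in>UNIV. \<Sum>j\<in>UNIV. \<bar>D$i$j\<bar>)"
      by (rule member_le_sum[where f="\<lambda>i. \<Sum>j\<in>UNIV. \<bar>D$i$j\<bar>"]) (auto intro: sum_nonneg)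
    then show ?thesis unfolding B_def by simp
  qed
  have "\<bar>mpow D (Suc k) $ i $ j\<bar> = \<bar>\<Sum>l\<in>UNIV. D$i$l * mpow D k $ l $ j\<bar>"
    by (simp add: matrix_matrix_mult_def)
  also have "\<dots> \<le> (\<Sum>l\<in>UNIV. \<bar>D$i$l\<bar> * B ^ k)"
    by (rule order_trans[OF sum_abs]) (auto intro!: sum_mono mult_left_mono simp: abs_mult Suc.IH)
  also have "\<dots> = (\<Sum>l\<in>UNIV. \<bar>D$i$l\<bar>) * B ^ k" by (simp add: sum_distrib_right)
  also have "\<dots> \<le> B * B ^ k" by (rule mult_right_mono[OF rowb]) (simp add: B0)
  finally show ?case by simp
qed

definition Em :: "real^'n^'n \<Rightarrow> real \<Rightarrow> real^'n^'n" where
  "Em D t = (\<chi> i j. \<Sum>n. (mpow D n $ i $ j / fact n) * t ^ n)"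

lemma Em_summable: "summable (\<lambda>n. (mpow D n $ i $ j / fact n) * y ^ n)"
proof -
  obtain B where B: "\<And>k. \<bar>mpow D k $ i $ j\<bar> \<le> B ^ k" using mpow_bound by blast
  have "summable (\<lambda>n. (B * \<bar>y\<bar>) ^ n /\<^sub>R fact n)" by (rule summable_exp_generic)
  then show ?thesis
  proof (rule summable_comparison_test'[where N=0])
    fix n :: nat
    have "norm (mpow D n $ i $ j / fact n * y ^ n) = \<bar>mpow D n $ i $ j\<bar> * \<bar>y\<bar>^n / fact n"
      by (simp add: abs_mult power_abs)
    also have "\<dots> \<le> B^n * \<bar>y\<bar>^n / fact n"
      by (intro divide_right_mono mult_right_mono B) auto
    also have "\<dots> = (B * \<bar>y\<bar>) ^ n /\<^sub>R fact n" by (simp add: power_mult_distrib divide_inverse)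
    finally show "norm (mpow D n $ i $ j / fact n * y ^ n) \<le> (B * \<bar>y\<bar>) ^ n /\<^sub>R fact n" .
  qed
qed

lemma Em_0: "Em D 0 = mat 1"
proof -
  have "(\<Sum>n. (mpow D n $ i $ j / fact n) * 0 ^ n) = mpow D 0 $ i $ j / fact 0" for i j
    by (rule powser_zero)
  then show ?thesis unfolding Em_def by (simp add: Finite_Cartesian_Product.vec_eq_iff Finite_Cartesian_Product.mat_def)
qed

lemma Em_deriv_entry:
  "((\<lambda>t. Em D t $ i $ j) has_real_derivative (\<Sum>n. (mpow D (Suc n) $ i $ j / fact n) * t ^ n)) (at t)"
proof -
  have "((\<lambda>t. \<Sum>n. (mpow D n $ i $ j / fact n) * t ^ n) has_real_derivative
        (\<Sum>n. diffs (\<lambda>n. mpow D n $ i $ j / fact n) n * t ^ n)) (at t)"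
    by (rule termdiffs_strong_converges_everywhere) (rule Em_summable)
  moreover have "diffs (\<lambda>n. mpow D n $ i $ j / fact n) n = mpow D (Suc n) $ i $ j / fact n" for n
    by (simp add: diffs_def del: mpow.simps)
  ultimately show ?thesis by (simp add: Em_def del: mpow.simps)
qed

lemma Em_deriv_left: "(\<Sum>n. (mpow D (Suc n) $ i $ j / fact n) * t ^ n) = (D ** Em D t) $ i $ j"
proof -
  have "(D ** Em D t) $ i $ j = (\<Sum>l\<in>UNIV. D $ i $ l * (\<Sum>n. (mpow D n $ l $ j / fact n) * t ^ n))"
    by (simp add: matrix_matrix_mult_def Em_def)
  also have "\<dots> = (\<Sum>l\<in>UNIV. \<Sum>n. D $ i $ l * ((mpow D n $ l $ j / fact n) * t ^ n))"
    by (intro sum.cong refl suminf_mult[symmetric] Em_summable)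
  also have "\<dots> = (\<Sum>n. \<Sum>l\<in>UNIV. D $ i $ l * ((mpow D n $ l $ j / fact n) * t ^ n))"
    by (rule suminf_sum[symmetric]) (intro summable_mult Em_summable)
  also have "\<dots> = (\<Sum>n. (mpow D (Suc n) $ i $ j / fact n) * t ^ n)"
  proof (intro suminf_cong)
    fix n
    have H: "(\<Sum>l\<in>UNIV. D $ i $ l * ((mpow D n $ l $ j / fact n) * t ^ n)) = (\<Sum>l\<in>UNIV. D $ i $ l * mpow D n $ l $ j) * (t^n / fact n)"
      unfolding sum_distrib_right by (rule sum.cong[OF refl]) simp
    have e: "mpow D (Suc n) $ i $ j = (\<Sum>l\<in>UNIV. D$i$l * mpow D n $ l $ j)" by (simp add: matrix_matrix_mult_def)
    have f: "(X::real) * (t^n / fact n) = X / fact n * t^n" for X by simp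
    show "(\<Sum>l\<in>UNIV. D $ i $ l * ((mpow D n $ l $ j / fact n) * t ^ n)) = (mpow D (Suc n) $ i $ j / fact n) * t ^ n"
      by (simp only: H e f)
  qed
  finally show ?thesis by simp
qed

lemma Em_deriv_right: "(\<Sum>n. (mpow D (Suc n) $ i $ j / fact n) * t ^ n) = (Em D t ** D) $ i $ j"
proof -
  have "(Em D t ** D) $ i $ j = (\<Sum>l\<in>UNIV. (\<Sum>n. (mpow D n $ i $ l / fact n) * t ^ n) * D $ l $ j)"
    by (simp add: matrix_matrix_mult_def Em_def)
  also have "\<dots> = (\<Sum>l\<in>UNIV. \<Sum>n. ((mpow D n $ i $ l / fact n) * t ^ n) * D $ l $ j)"
    by (intro sum.cong refl suminf_mult2 Em_summable)
  also have "\<dots> = (\<Sum>n. \<Sum>l\<in>UNIV. ((mpow D n $ i $ l / fact n) * t ^ n) * D $ l $ j)"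
    by (rule suminf_sum[symmetric]) (intro summable_mult2 Em_summable)
  also have "\<dots> = (\<Sum>n. (mpow D (Suc n) $ i $ j / fact n) * t ^ n)"
  proof (intro suminf_cong)
    fix n
    have H: "(\<Sum>l\<in>UNIV. ((mpow D n $ i $ l / fact n) * t ^ n) * D $ l $ j) = (\<Sum>l\<in>UNIV. mpow D n $ i $ l * D $ l $ j) * (t^n / fact n)"
      unfolding sum_distrib_right by (rule sum.cong[OF refl]) simp
    have e: "mpow D (Suc n) $ i $ j = (\<Sum>l\<in>UNIV. mpow D n $ i $ l * D $ l $ j)" by (simp only: mpow_Suc') (simp add: matrix_matrix_mult_def)
    have f: "(X::real) * (t^n / fact n) = X / fact n * t^n" for X by simp
    show "(\<Sum>l\<in>UNIV. ((mpow D n $ i $ l / fact n) * t ^ n) * D $ l $ j) = (mpow D (Suc n) $ i $ j / fact n) * t ^ n"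
      by (simp only: H e f)
  qed
  finally show ?thesis by simp
qed

lemma Em_has_deriv_entry:
  "((\<lambda>t. Em D t $ i $ j) has_real_derivative (D ** Em D t) $ i $ j) (at t)"
  "((\<lambda>t. Em D t $ i $ j) has_real_derivative (Em D t ** D) $ i $ j) (at t)"
  using Em_deriv_entry[of D i j t] Em_deriv_left[of D i j t] Em_deriv_right[of D i j t] by simp_all

lemma Em_solution:
  "((\<lambda>t. Em D t *v v) has_vector_derivative D *v (Em D t *v v)) (at t within S)"
proof -
  have "((\<lambda>t. Em D t *v v) has_vector_derivative (D ** Em D t) *v v) (at t)"
  proof (rule vec_has_vector_derivative)
    fix i
    show "((\<lambda>t. (Em D t *v v) $ i) has_real_derivative ((D ** Em D t) *v v) $ i) (at t)"
      unfolding matrix_vector_mult_def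
      by (simp, intro DERIV_sum DERIV_cmult_right Em_has_deriv_entry)
  qed
  then show ?thesis by (simp add: matrix_vector_mul_assoc has_vector_derivative_at_within)
qed

lemma Em_bound:
  assumes "exp_stable (\<lambda>z. D *v z)"
  obtains K \<alpha> where "K > 0" "\<alpha> > 0" "\<And>t v. t \<ge> 0 \<Longrightarrow> norm (Em D t *v v) \<le> K * exp (-\<alpha>*t) * norm v"
proof -
  from assms obtain K \<alpha> where K: "K > 0" "\<alpha> > 0" and
    H: "\<And>x::real \<Rightarrow> real^'a. (\<forall>t\<ge>0. (x has_vector_derivative D *v x t) (at t within {0..})) \<Longrightarrow>
        (\<forall>t\<ge>0. norm (x t) \<le> K * exp (- \<alpha> * t) * norm (x 0))"
    unfolding exp_stable_def by blast
  have "norm (Em D t *v v) \<le> K * exp (-\<alpha>*t) * norm v" if "t \<ge> 0" for t v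
    using H[of "\<lambda>t. Em D t *v v"] Em_solution[of D v _ "{0..}"] that by (simp add: Em_0)
  then show ?thesis using K that by blast
qed

lemma perturb:
  fixes D :: "real^'n^'n"
  assumes st: "exp_stable (\<lambda>z. D *v z)" and K1: "K1 > 0" and beta: "\<beta> > 0"
  shows "\<exists>K2 \<gamma>. K2 > 0 \<and> \<gamma> > 0 \<and> (\<forall>(z::real \<Rightarrow> real^'n) u r.
     (\<forall>t\<ge>0. (z has_vector_derivative (D *v z t + u t)) (at t within {0..})) \<longrightarrow>
     (\<forall>t\<ge>0. norm (u t) \<le> K1 * exp (-\<beta>*t) * r) \<longrightarrow>
     (\<forall>t\<ge>0. norm (z t) \<le> K2 * exp (-\<gamma>*t) * (norm (z 0) + r)))"
proof -
  obtain K \<alpha> where K: "K > 0" and al: "\<alpha> > 0" and EB: "\<And>t v. t \<ge> 0 \<Longrightarrow> norm (Em D t *v v) \<le> K * exp (-\<alpha>*t) * norm v"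
    using Em_bound[OF st] by blast
  define \<gamma> where "\<gamma> = min \<alpha> \<beta> / 2"
  have ga: "\<gamma> > 0" "2*\<gamma> \<le> \<alpha>" "2*\<gamma> \<le> \<beta>" using al beta by (auto simp: \<gamma>_def)
  define K2 where "K2 = 1 + K + K*K1/\<gamma>"
  have KK: "K*K1/\<gamma> > 0" using K K1 ga by simp
  have K2: "K2 > 0" "K2 \<ge> 1" "K \<le> K2" "K*K1/\<gamma> \<le> K2" using K KK by (auto simp: K2_def)
  have main: "norm (z T) \<le> K2 * exp (-\<gamma>*T) * (norm (z 0) + r)"
    if zd: "\<forall>t\<ge>0. (z has_vector_derivative (D *v z t + u t)) (at t within {0..})"
    and ub: "\<forall>t\<ge>0. norm (u t) \<le> K1 * exp (-\<beta>*t) * r" and T: "T \<ge> 0"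
    for z :: "real \<Rightarrow> real^'n" and u r T
  proof -
    have r: "r \<ge> 0"
    proof -
      have "norm (u 0) \<le> K1 * r" using ub[rule_format, of 0] by simp
      then have "0 \<le> K1 * r" using norm_ge_zero[of "u 0"] by linarith
      then show ?thesis using K1 by (simp add: zero_le_mult_iff)
    qed
    show ?thesis
    proof (cases "T = 0")
      case True
      then show ?thesis using K2 r by (simp add: mult_le_cancel_right1 order_trans[OF _ mult_right_mono[OF K2(2)]] add_nonneg_nonneg)
    next
      case False
      with T have Tp: "T > 0" by simp
      define h where "h = (\<lambda>s. Em D (T - s) *v z s)"
      have hd: "(h has_vector_derivative (Em D (T - s) *v u s)) (at s within {0..})" if s: "s \<ge> 0" for s
      proof -
        let ?E = "Em D (T - s)"
        have "(h has_vector_derivative (?E *v (D *v z s + u s) - (?E ** D) *v z s)) (at s within {0..})"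
          unfolding h_def
        proof (rule vec_has_vector_derivative)
          fix i
          have zj: "((\<lambda>t. z t $ j) has_real_derivative (D *v z s + u s) $ j) (at s within {0..})" for j
            using vec_has_vector_derivative_nth[OF zd[rule_format, OF s]] .
          have ej: "((\<lambda>t. Em D (T - t) $ i $ j) has_real_derivative (?E ** D) $ i $ j * (-1)) (at s within {0..})" for j
          proof -
            have "((\<lambda>t. Em D (T - t) $ i $ j) has_real_derivative (?E ** D) $ i $ j * (-1)) (at s)"
              by (rule DERIV_chain2[OF Em_has_deriv_entry(2)]) (auto intro!: derivative_eq_intros)
            then show ?thesis by (rule has_field_derivative_at_within)
          qed
          have "((\<lambda>t. \<Sum>j\<in>UNIV. Em D (T - t) $ i $ j * z t $ j) has_real_derivative
              (\<Sum>j\<in>UNIV. (?E ** D) $ i $ j * (-1) * z s $ j + (D *v z s + u s) $ j * ?E $ i $ j)) (at s within {0..})"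
            by (intro DERIV_sum DERIV_mult ej zj)
          moreover have "(\<Sum>j\<in>UNIV. (?E ** D) $ i $ j * (-1) * z s $ j + (D *v z s + u s) $ j * ?E $ i $ j)
              = (\<Sum>j\<in>UNIV. ?E $ i $ j * (D *v z s + u s) $ j) - (\<Sum>j\<in>UNIV. (?E ** D) $ i $ j * z s $ j)"
            by (simp add: sum.distrib sum_subtractf[symmetric] mult.commute)
          ultimately show "((\<lambda>t. (Em D (T - t) *v z t) $ i) has_real_derivative (?E *v (D *v z s + u s) - (?E ** D) *v z s) $ i) (at s within {0..})"
            unfolding vector_minus_component by (simp only: matrix_vector_mult_def vec_lambda_beta)
        qed
        moreover have "?E *v (D *v z s + u s) - (?E ** D) *v z s = ?E *v u s"
          by (simp add: matrix_vector_right_distrib matrix_vector_mul_assoc)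
        ultimately show ?thesis by simp
      qed
      have hcont: "continuous_on {0..T} h"
        by (rule continuous_on_vector_derivative[of _ _ "\<lambda>s. Em D (T - s) *v u s"])
           (auto intro: has_vector_derivative_within_subset[OF hd])
      define c where "c = K * K1 * r * exp (-2*\<gamma>*T)"
      have c0: "c \<ge> 0" unfolding c_def using K K1 r by simp
      have bnd: "norm (h T - h 0) \<le> (\<lambda>s. s * c) T - (\<lambda>s. s * c) 0"
      proof (rule differentiable_bound_general[OF Tp hcont])
        show "continuous_on {0..T} (\<lambda>s. s * c)" by (intro continuous_intros)
        fix s assume s: "0 < s" "s < T"
        have "(h has_vector_derivative (Em D (T - s) *v u s)) (at s within {0<..})"
          by (rule has_vector_derivative_within_subset[OF hd]) (use s in auto)
        then show "(h has_vector_derivative (Em D (T - s) *v u s)) (at s)"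
          using has_vector_derivative_within_open[of s "{0<..}"] s by auto
        have "((\<lambda>s. s * c) has_real_derivative 1 * c) (at s)" by (rule DERIV_cmult_right[OF DERIV_ident])
        then show "((\<lambda>s. s * c) has_vector_derivative c) (at s)"
          by (simp add: has_real_derivative_iff_has_vector_derivative)
        have b1: "norm (Em D (T - s) *v u s) \<le> K * exp (-\<alpha>*(T - s)) * norm (u s)" using EB s by simp
        have b2: "K * exp (-\<alpha>*(T - s)) * norm (u s) \<le> K * exp (-\<alpha>*(T - s)) * (K1 * exp (-\<beta>* s) * r)"
          using ub s K by (intro mult_left_mono) auto
        have b3: "K * exp (-\<alpha>*(T - s)) * (K1 * exp (-\<beta>* s) * r) = K * K1 * r * exp (-\<alpha>*(T - s) - \<beta>* s)"
        proof -
          have "exp (-\<alpha>*(T - s) - \<beta> * s) = exp (-\<alpha>*(T - s)) * exp (-\<beta> * s)"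
            by (simp flip: exp_add)
          then show ?thesis by (simp add: mult_ac)
        qed
        have b4: "K * K1 * r * exp (-\<alpha>*(T - s) - \<beta>* s) \<le> c" unfolding c_def
        proof (intro mult_left_mono)
          have "2*\<gamma>*(T - s) \<le> \<alpha>*(T - s)" using ga s by (intro mult_right_mono) auto
          moreover have "2*\<gamma>* s \<le> \<beta>* s" using ga s by (intro mult_right_mono) auto
          ultimately show "exp (-\<alpha>*(T - s) - \<beta>* s) \<le> exp (-2*\<gamma>*T)" by (simp add: algebra_simps)
        qed (use K K1 r in auto)
        from b1 b2 b3 b4 have "norm (Em D (T - s) *v u s) \<le> c" by linarith
        then show "norm (Em D (T - s) *v u s) \<le> c" .
      qed
      have hT: "h T = z T" by (simp add: h_def Em_0)
      have h0: "norm (h 0) \<le> K * exp (-\<gamma>*T) * norm (z 0)"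
      proof -
        have "norm (h 0) \<le> K * exp (-\<alpha>*T) * norm (z 0)" unfolding h_def using EB T by simp
        also have "\<dots> \<le> K * exp (-\<gamma>*T) * norm (z 0)"
          using ga T K by (intro mult_right_mono mult_left_mono) (auto simp: mult_right_mono)
        finally show ?thesis .
      qed
      have Tc: "T * c \<le> K*K1/\<gamma> * r * exp (-\<gamma>*T)"
      proof -
        have "\<gamma>*T \<le> exp (\<gamma>*T)" using exp_ge_add_one_self[of "\<gamma>*T"] by linarith
        then have "T \<le> exp (\<gamma>*T) / \<gamma>" using ga by (simp add: field_simps)
        then have "T * c \<le> exp (\<gamma>*T) / \<gamma> * c" using c0 by (rule mult_right_mono)
        also have "exp (\<gamma>*T) / \<gamma> * c = K*K1/\<gamma> * r * (exp (\<gamma>*T) * exp (-2*\<gamma>*T))" by (simp add: c_def)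
        also have "exp (\<gamma>*T) * exp (-2*\<gamma>*T) = exp (-\<gamma>*T)" by (simp flip: exp_add)
        finally show ?thesis .
      qed
      have "norm (z T) \<le> norm (h 0) + norm (h T - h 0)" using hT norm_triangle_ineq[of "h 0" "h T - h 0"] by simp
      also have "\<dots> \<le> K * exp (-\<gamma>*T) * norm (z 0) + K*K1/\<gamma> * r * exp (-\<gamma>*T)"
        using h0 bnd Tc by simp
      also have "\<dots> \<le> K2 * exp (-\<gamma>*T) * norm (z 0) + K2 * r * exp (-\<gamma>*T)"
        using K2 r by (intro add_mono mult_right_mono) auto
      also have "\<dots> = K2 * exp (-\<gamma>*T) * (norm (z 0) + r)" by (simp add: algebra_simps)
      finally show ?thesis .
    qed
  qed
  show ?thesis using K2 ga main by blast
qed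

lemma quad_transpose: "(x::real^'n) \<bullet> (transpose M *v x) = x \<bullet> (M *v x)"
proof -
  have "x \<bullet> (transpose M *v x) = (\<Sum>i\<in>UNIV. \<Sum>j\<in>UNIV. x$i * M$j$i * x$j)"
    by (simp add: inner_vec_def matrix_vector_mult_def transpose_def sum_distrib_left mult_ac)
  also have "\<dots> = (\<Sum>j\<in>UNIV. \<Sum>i\<in>UNIV. x$i * M$j$i * x$j)" by (rule sum.swap)
  also have "\<dots> = x \<bullet> (M *v x)"
    by (simp add: inner_vec_def matrix_vector_mult_def sum_distrib_left mult_ac)
  finally show ?thesis .
qed

lemma quad_vm: "(x::real^'n) \<bullet> (x v* M) = x \<bullet> (M *v x)"
  using quad_transpose[of x M] by simp

lemma quad_sym_part: "(x::real^'n) \<bullet> (sym_part M *v x) = x \<bullet> (M *v x)"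
  by (simp add: sym_part_def scaleR_matrix_vector_assoc[symmetric] matrix_vector_mult_add_rdistrib inner_add_right quad_vm)

lemma quad_scale: "((c::real) *\<^sub>R x) \<bullet> ((P::real^'n^'n) *v (c *\<^sub>R x)) = c^2 * (x \<bullet> (P *v x))"
proof -
  have "P *v (c *\<^sub>R x) = c *\<^sub>R (P *v x)" by (rule matrix_vector_mult_scaleR)
  then show ?thesis by (simp add: power2_eq_square)
qed

lemma pos_def_bounds:
  fixes P :: "real^'n^'n"
  assumes "pos_def P"
  obtains pmin pmax where "pmin > 0" "pmax > 0" "\<And>x. pmin * (norm x)^2 \<le> x \<bullet> (P *v x)" "\<And>x. x \<bullet> (P *v x) \<le> pmax * (norm x)^2"
proof -
  let ?q = "\<lambda>x::real^'n. x \<bullet> (P *v x)"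
  have cont: "continuous_on (sphere 0 1) ?q"
    by (intro continuous_intros continuous_on_compose2[OF linear_continuous_on[OF matrix_vector_mul_bounded_linear]]) auto
  have ne: "sphere (0::real^'n) 1 \<noteq> {}"
  proof -
    obtain i :: 'n where True by blast
    have "axis i (1::real) \<in> sphere 0 1" by simp
    then show ?thesis by blast
  qed
  obtain x0 where x0: "x0 \<in> sphere 0 1" "\<And>y. y \<in> sphere 0 1 \<Longrightarrow> ?q x0 \<le> ?q y"
    using continuous_attains_inf[OF compact_sphere ne cont] by blast
  obtain x1 where x1: "x1 \<in> sphere 0 1" "\<And>y. y \<in> sphere 0 1 \<Longrightarrow> ?q y \<le> ?q x1"
    using continuous_attains_sup[OF compact_sphere ne cont] by blast
  have "x0 \<noteq> 0" using x0(1) by auto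
  then have q0: "?q x0 > 0" using assms unfolding pos_def_def by auto
  have scale: "?q x = (norm x)^2 * ?q (x /\<^sub>R norm x)" if "x \<noteq> 0" for x
  proof -
    have "?q x = ?q (norm x *\<^sub>R (x /\<^sub>R norm x))" using that by simp
    also have "\<dots> = (norm x)^2 * ?q (x /\<^sub>R norm x)" by (rule quad_scale)
    finally show ?thesis .
  qed
  have lo: "?q x0 * (norm x)^2 \<le> ?q x" for x
  proof (cases "x = 0")
    case False
    then have "?q x0 \<le> ?q (x /\<^sub>R norm x)" by (intro x0(2)) simp
    then have "?q x0 * (norm x)^2 \<le> ?q (x /\<^sub>R norm x) * (norm x)^2" by (rule mult_right_mono) simp
    then show ?thesis using scale[OF False] by (simp add: mult.commute)
  qed simp
  have hi: "?q x \<le> ?q x1 * (norm x)^2" for x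
  proof (cases "x = 0")
    case False
    then have "?q (x /\<^sub>R norm x) \<le> ?q x1" by (intro x1(2)) simp
    then have "?q (x /\<^sub>R norm x) * (norm x)^2 \<le> ?q x1 * (norm x)^2" by (rule mult_right_mono) simp
    then show ?thesis using scale[OF False] by (simp add: mult.commute)
  qed simp
  have "?q x1 > 0" using q0 x0(2)[OF x1(1)] x1(2)[OF x0(1)] by linarith
  then show ?thesis using that[OF q0 _ lo hi] by blast
qed

lemma lyapunov_exp_stable:
  fixes P D :: "real^'n^'n"
  assumes P: "pos_def P" and e: "\<epsilon> > 0"
    and N: "neg_def (sym_part (P ** D) + \<epsilon> *\<^sub>R mat 1)"
  shows "exp_stable (\<lambda>z. D *v z)"
proof -
  obtain pmin pmax where pm: "pmin > 0" "pmax > 0" and lo: "\<And>x. pmin * (norm x)^2 \<le> x \<bullet> (P *v x)"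
    and hi: "\<And>x. x \<bullet> (P *v x) \<le> pmax * (norm x)^2"
    using pos_def_bounds[OF P] by blast
  have Psym: "transpose P = P" using P by (simp add: pos_def_def)
  have neg: "x \<bullet> ((P ** D) *v x) \<le> - \<epsilon> * (norm x)^2" for x
  proof (cases "x = 0")
    case False
    then have "x \<bullet> ((sym_part (P ** D) + \<epsilon> *\<^sub>R mat 1) *v x) < 0" using N by (simp add: neg_def_def)
    then show ?thesis
      by (simp add: matrix_vector_mult_add_rdistrib inner_add_right quad_sym_part scaleR_matrix_vector_assoc[symmetric]
          power2_norm_eq_inner)
  qed simp
  define a where "a = 2 * \<epsilon> / pmax"
  have a: "a > 0" using e pm by (simp add: a_def)
  define K where "K = sqrt (pmax / pmin)"
  have K: "K > 0" using pm by (simp add: K_def)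
  have H: "\<forall>x::real \<Rightarrow> real^'n. (\<forall>t\<ge>0. (x has_vector_derivative D *v x t) (at t within {0..})) \<longrightarrow>
        (\<forall>t\<ge>0. norm (x t) \<le> K * exp (- (a/2) * t) * norm (x 0))"
  proof (intro allI impI)
    fix x :: "real \<Rightarrow> real^'n" and T :: real
    assume xd: "\<forall>t\<ge>0. (x has_vector_derivative D *v x t) (at t within {0..})" and T: "T \<ge> 0"
    define V where "V = (\<lambda>t. x t \<bullet> (P *v x t))"
    define W where "W = (\<lambda>t. exp (a * t) * V t)"
    have Vd: "(V has_real_derivative 2 * (x t \<bullet> ((P ** D) *v x t))) (at t within {0..})" if t: "t \<ge> 0" for t
    proof -
      have "(V has_vector_derivative (x t \<bullet> (P *v (D *v x t)) + (D *v x t) \<bullet> (P *v x t))) (at t within {0..})"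
        unfolding V_def
        by (rule bounded_bilinear.has_vector_derivative[OF bounded_bilinear_inner xd[rule_format, OF t]
              bounded_linear.has_vector_derivative[OF matrix_vector_mul_bounded_linear xd[rule_format, OF t]]])
      moreover have "(D *v x t) \<bullet> (P *v x t) = x t \<bullet> (P *v (D *v x t))"
      proof -
        have "x t \<bullet> (P *v (D *v x t)) = (x t v* P) \<bullet> (D *v x t)" by (simp add: dot_lmul_matrix)
        also have "x t v* P = transpose P *v x t" by simp
        finally show ?thesis using Psym by (simp add: inner_commute)
      qed
      ultimately show ?thesis
        by (simp add: has_real_derivative_iff_has_vector_derivative matrix_vector_mul_assoc)
    qed
    have Wd: "(W has_real_derivative exp (a * t) * (a * V t + 2 * (x t \<bullet> ((P ** D) *v x t)))) (at t within {0..})"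
      if t: "t \<ge> 0" for t
    proof -
      have e: "((\<lambda>t. exp (a*t)) has_real_derivative exp (a*t) * a) (at t within {0..})"
        by (auto intro!: derivative_eq_intros)
      have "(W has_real_derivative exp (a*t) * a * V t + 2 * (x t \<bullet> ((P ** D) *v x t)) * exp (a*t)) (at t within {0..})"
        unfolding W_def by (rule DERIV_mult[OF e Vd[OF t]])
      moreover have "exp (a*t) * a * V t + 2 * (x t \<bullet> ((P ** D) *v x t)) * exp (a*t) = exp (a * t) * (a * V t + 2 * (x t \<bullet> ((P ** D) *v x t)))"
        by (simp add: algebra_simps)
      ultimately show ?thesis by simp
    qed
    have Wd_nonpos: "a * V t + 2 * (x t \<bullet> ((P ** D) *v x t)) \<le> 0" for t
    proof -
      have "a * V t \<le> a * (pmax * (norm (x t))^2)" using hi a unfolding V_def by (intro mult_left_mono) auto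
      also have "\<dots> = 2 * \<epsilon> * (norm (x t))^2" using pm by (simp add: a_def)
      finally show ?thesis using neg[of "x t"] by simp
    qed
    have Wmono: "W T \<le> W 0"
    proof (rule DERIV_nonpos_imp_decreasing_open[OF T])
      fix s assume s: "0 < s" "s < T"
      have "(W has_real_derivative exp (a * s) * (a * V s + 2 * (x s \<bullet> ((P ** D) *v x s)))) (at s within {0<..})"
        by (rule DERIV_subset[OF Wd]) (use s in auto)
      then have "(W has_real_derivative exp (a * s) * (a * V s + 2 * (x s \<bullet> ((P ** D) *v x s)))) (at s)"
        using at_within_open[of s "{0<..}"] s by auto
      moreover have "exp (a * s) * (a * V s + 2 * (x s \<bullet> ((P ** D) *v x s))) \<le> 0"
        using Wd_nonpos[of s] by (simp add: mult_nonneg_nonpos)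
      ultimately show "\<exists>y. DERIV W s :> y \<and> y \<le> 0" by blast
    next
      show "continuous_on {0..T} W"
        by (rule DERIV_continuous_on[of _ _ "\<lambda>t. exp (a * t) * (a * V t + 2 * (x t \<bullet> ((P ** D) *v x t)))"])
          (rule DERIV_subset[OF Wd], auto)
    qed
    have "pmin * (norm (x T))^2 \<le> V T" using lo unfolding V_def by simp
    also have "V T = exp (- a * T) * W T" unfolding W_def
      by (simp add: mult.assoc[symmetric] exp_minus_inverse flip: exp_add)
    also have "\<dots> \<le> exp (- a * T) * W 0" using Wmono by simp
    also have "\<dots> = exp (- a * T) * V 0" by (simp add: W_def)
    also have "\<dots> \<le> exp (- a * T) * (pmax * (norm (x 0))^2)" using hi unfolding V_def by simp
    finally have sq0: "pmin * (norm (x T))^2 \<le> exp (- a * T) * (pmax * (norm (x 0))^2)" .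
    have "(norm (x T))^2 \<le> exp (- a * T) * (pmax * (norm (x 0))^2) / pmin"
      using sq0 pm by (simp add: le_divide_eq mult.commute)
    also have "\<dots> = (pmax / pmin) * exp (- a * T) * (norm (x 0))^2" by simp
    finally have sq: "(norm (x T))^2 \<le> (pmax / pmin) * exp (- a * T) * (norm (x 0))^2" .
    have k2: "K^2 = pmax/pmin" using pm by (simp add: K_def)
    have e2: "(exp (-(a/2)*T))^2 = exp (-a*T)" by (simp add: power2_eq_square flip: exp_add)
    have eq: "(K * exp (- (a/2) * T) * norm (x 0))^2 = (pmax / pmin) * exp (- a * T) * (norm (x 0))^2"
      by (simp only: power_mult_distrib k2 e2)
    show "norm (x T) \<le> K * exp (- (a/2) * T) * norm (x 0)"
    proof (rule power2_le_imp_le)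
      show "(norm (x T))^2 \<le> (K * exp (- (a/2) * T) * norm (x 0))^2" unfolding eq by (rule sq)
      show "0 \<le> K * exp (- (a/2) * T) * norm (x 0)" using K by simp
    qed
  qed
  show ?thesis unfolding exp_stable_def
  proof (rule exI[of _ K], rule exI[of _ "a/2"], intro conjI)
    show "K > 0" by (rule K)
    show "a/2 > 0" using a by simp
  qed (rule H)
qed


lemma matrix_vector_sum: "(M::real^'a^'b) *v (\<Sum>i\<in>S. f i) = (\<Sum>i\<in>S. M *v f i)"
  by (induction S rule: infinite_finite_induct) (simp_all add: matrix_vector_right_distrib)

lemma norm_le_sum_vec: "norm (x::'a::real_normed_vector^'n) \<le> (\<Sum>i\<in>UNIV. norm (x $ i))"
  unfolding norm_vec_def by (rule L2_set_le_sum) simp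

theorem theorem6:
  fixes A :: "real^'n^'n" and C :: "real^'n^'q" and F :: "real^'q^'n"
    and c \<epsilon> :: real and L Lt :: "real^'m^'m" and i1 :: 'm
    and lam :: "nat \<Rightarrow> real"
  assumes c_pos: "c > 0"
    and L_irr: "irreducible_mat L"
    and L_rank: "rank L = CARD('m) - 1"
    and L_offdiag: "\<forall>i j. i \<noteq> j \<longrightarrow> L $ i $ j \<ge> 0"
    and L_rows: "\<forall>i. (\<Sum>j\<in>UNIV. L $ i $ j) = 0"
    and eps_pos: "\<epsilon> > 0"
    and Lt_def: "Lt = (\<chi> i j. if i = i1 \<and> j = i1 then L $ i $ j - \<epsilon> else L $ i $ j)"
    and lam_eig: "\<forall>x::real. det (x *\<^sub>R mat 1 - Lt) = (\<Prod>k\<in>{1..CARD('m)}. (x - lam k))"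
    and lam_neg: "0 > lam 1"
    and lam_ord: "\<forall>k\<in>{1..<CARD('m)}. lam (Suc k) \<le> lam k"
    and cond: "(\<forall>k\<in>{1..CARD('m)}. exp_stable (\<lambda>z::real^'n. (A + (c * lam k) *\<^sub>R (F ** C)) *v z))
             \<or> (\<exists>P \<epsilon>'. pos_def P \<and> \<epsilon>' > 0 \<and>
                  (\<forall>k\<in>{1..CARD('m)}.
                     neg_def (sym_part (P ** (A + (c * lam k) *\<^sub>R (F ** C))) + \<epsilon>' *\<^sub>R mat 1)))"
  shows "exp_stable (coupled_rhs A F C c Lt)"
proof -
  let ?n = "CARD('m)"
  obtain W V b where
    WL: "\<forall>k<?n. \<forall>j. (\<Sum>i\<in>UNIV. W k i * Lt$i$j) = (\<Sum>l<?n. b k l * W l j)" and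
    bu: "\<forall>k<?n. \<forall>l<k. b k l = 0" and
    bd: "\<forall>k<?n. b k k \<in> lam ` {1..?n}" and
    VW: "\<forall>i j. (\<Sum>k<?n. V i k * W k j) = (if i = j then 1 else 0)"
    using triang_exists[OF lam_eig] by blast
  define G where "G = F ** C"
  define Dk where "Dk k = A + (c * b k k) *\<^sub>R G" for k
  have Dst: "exp_stable (\<lambda>z. Dk k *v z)" if k: "k < ?n" for k
  proof -
    obtain k' where k': "k' \<in> {1..?n}" "b k k = lam k'" using bd k by blast
    from cond show ?thesis
    proof
      assume "\<forall>k\<in>{1..?n}. exp_stable (\<lambda>z::real^'n. (A + (c * lam k) *\<^sub>R (F ** C)) *v z)"
      then show ?thesis using k' by (simp add: Dk_def G_def)
    next
      assume "\<exists>P \<epsilon>'. pos_def P \<and> \<epsilon>' > 0 \<and> (\<forall>k\<in>{1..?n}.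
                     neg_def (sym_part (P ** (A + (c * lam k) *\<^sub>R (F ** C))) + \<epsilon>' *\<^sub>R mat 1))"
      then obtain P \<epsilon>' where P: "pos_def P" and e: "\<epsilon>' > 0" and
        N: "\<forall>k\<in>{1..?n}. neg_def (sym_part (P ** (A + (c * lam k) *\<^sub>R (F ** C))) + \<epsilon>' *\<^sub>R mat 1)" by blast
      have "exp_stable (\<lambda>z. (A + (c * lam k') *\<^sub>R (F ** C)) *v z)"
        by (rule lyapunov_exp_stable[OF P e]) (use N k' in blast)
      then show ?thesis using k' by (simp add: Dk_def G_def)
    qed
  qed
  define Lf where "Lf k Y = (\<Sum>i\<in>UNIV. W k i *\<^sub>R (Y $ i))" for k and Y :: "real^'n^'m"
  have rhs0: "Lf k (coupled_rhs A F C c Lt Y) = A *v Lf k Y + c *\<^sub>R (G *v (\<Sum>l<?n. b k l *\<^sub>R Lf l Y))"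
    if k: "k < ?n" for k Y
  proof -
    have "Lf k (coupled_rhs A F C c Lt Y) = (\<Sum>i\<in>UNIV. W k i *\<^sub>R (A *v Y $ i)) +
        c *\<^sub>R (\<Sum>i\<in>UNIV. \<Sum>j\<in>UNIV. (W k i * Lt $ i $ j) *\<^sub>R (G *v Y $ j))"
      by (simp add: Lf_def coupled_rhs_def scaleR_add_right sum.distrib scaleR_sum_right G_def
          matrix_vector_mul_assoc mult.left_commute)
    also have "(\<Sum>i\<in>UNIV. W k i *\<^sub>R (A *v Y $ i)) = A *v Lf k Y"
      by (simp add: Lf_def matrix_vector_sum matrix_vector_mult_scaleR)
    also have "(\<Sum>i\<in>UNIV. \<Sum>j\<in>UNIV. (W k i * Lt $ i $ j) *\<^sub>R (G *v Y $ j))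
        = (\<Sum>j\<in>UNIV. (\<Sum>i\<in>UNIV. W k i * Lt $ i $ j) *\<^sub>R (G *v Y $ j))"
      by (subst sum.swap) (simp add: scaleR_sum_left)
    also have "\<dots> = (\<Sum>j\<in>UNIV. (\<Sum>l<?n. b k l * W l j) *\<^sub>R (G *v Y $ j))"
      using WL k by simp
    also have "\<dots> = (\<Sum>l<?n. \<Sum>j\<in>UNIV. (b k l * W l j) *\<^sub>R (G *v Y $ j))"
      by (subst sum.swap) (simp add: scaleR_sum_left)
    also have "\<dots> = G *v (\<Sum>l<?n. b k l *\<^sub>R Lf l Y)"
      by (simp add: matrix_vector_sum matrix_vector_mult_scaleR Lf_def scaleR_sum_right)
    finally show ?thesis .
  qed
  have rhs: "Lf k (coupled_rhs A F C c Lt Y) = Dk k *v Lf k Y + c *\<^sub>R (\<Sum>l\<in>{k<..<?n}. b k l *\<^sub>R (G *v Lf l Y))"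
    if k: "k < ?n" for k Y
  proof -
    have split: "{..<?n} = {..<k} \<union> ({k} \<union> {k<..<?n})" using k by auto
    have "(\<Sum>l<?n. b k l *\<^sub>R Lf l Y) = (\<Sum>l<k. b k l *\<^sub>R Lf l Y) + (b k k *\<^sub>R Lf k Y + (\<Sum>l\<in>{k<..<?n}. b k l *\<^sub>R Lf l Y))"
      unfolding split by (subst sum.union_disjoint, auto)+
    also have "(\<Sum>l<k. b k l *\<^sub>R Lf l Y) = 0" using bu k by simp
    finally have "(\<Sum>l<?n. b k l *\<^sub>R Lf l Y) = b k k *\<^sub>R Lf k Y + (\<Sum>l\<in>{k<..<?n}. b k l *\<^sub>R Lf l Y)" by simp
    then show ?thesis
      by (simp add: rhs0[OF k] Dk_def matrix_vector_mult_add_rdistrib matrix_vector_right_distrib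
          matrix_vector_sum matrix_vector_mult_scaleR scaleR_matrix_vector_assoc[symmetric] scaleR_add_right algebra_simps)
  qed
  have Lderiv: "((\<lambda>t. Lf k (X t)) has_vector_derivative Lf k X') F" if "(X has_vector_derivative X') F" for X X' F k
    unfolding Lf_def
    by (intro has_vector_derivative_sum bounded_linear.has_vector_derivative[OF bounded_linear_scaleR_right]
        bounded_linear.has_vector_derivative[OF bounded_linear_vec_nth] that)
  define NL where "NL k = (\<Sum>i\<in>UNIV. \<bar>W k i\<bar>)" for k
  have NL0: "NL k \<ge> 0" for k by (simp add: NL_def sum_nonneg)
  have Lbound: "norm (Lf k Y) \<le> NL k * norm Y" for k Y
  proof -
    have "norm (Lf k Y) \<le> (\<Sum>i\<in>UNIV. norm (W k i *\<^sub>R Y $ i))" unfolding Lf_def by (rule norm_sum)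
    also have "\<dots> \<le> (\<Sum>i\<in>UNIV. \<bar>W k i\<bar> * norm Y)"
      by (intro sum_mono) (simp add: mult_left_mono[OF Finite_Cartesian_Product.norm_nth_le])
    finally show ?thesis by (simp add: NL_def sum_distrib_right)
  qed
  obtain NG where NG: "NG > 0" "\<And>v. norm (G *v v) \<le> norm v * NG"
    using bounded_linear.pos_bounded[OF matrix_vector_mul_bounded_linear[of G]] by blast
  define sol where "sol X \<longleftrightarrow> (\<forall>t\<ge>0. (X has_vector_derivative coupled_rhs A F C c Lt (X t)) (at t within {0..}))"
    for X :: "real \<Rightarrow> real^'n^'m"
  have claim: "\<exists>K \<gamma>. K > 0 \<and> \<gamma> > 0 \<and> (\<forall>X. sol X \<longrightarrow> (\<forall>l t. ?n - d \<le> l \<longrightarrow> l < ?n \<longrightarrow> t \<ge> 0 \<longrightarrow>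
      norm (Lf l (X t)) \<le> K * exp (-\<gamma>*t) * norm (X 0)))" if "d \<le> ?n" for d
    using that
  proof (induction d)
    case 0
    show ?case by (rule exI[of _ 1], rule exI[of _ 1]) auto
  next
    case (Suc d)
    define k where "k = ?n - Suc d"
    have k: "k < ?n" "Suc k = ?n - d" using Suc.prems by (auto simp: k_def)
    from Suc.IH Suc.prems obtain K \<gamma> where K: "K > 0" and ga: "\<gamma> > 0" and
      IH: "\<And>X l t. sol X \<Longrightarrow> ?n - d \<le> l \<Longrightarrow> l < ?n \<Longrightarrow> t \<ge> 0 \<Longrightarrow> norm (Lf l (X t)) \<le> K * exp (-\<gamma>*t) * norm (X 0)"
      by auto
    define S where "S = (\<Sum>l\<in>{k<..<?n}. \<bar>b k l\<bar>)"
    have S0: "S \<ge> 0" by (simp add: S_def sum_nonneg)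
    define K1 where "K1 = \<bar>c\<bar> * S * NG * K + 1"
    have "\<bar>c\<bar> * S * NG * K \<ge> 0" using S0 NG(1) K by simp
    then have K1: "K1 > 0" by (simp add: K1_def)
    obtain K2 \<gamma>2 where K2: "K2 > 0" and ga2: "\<gamma>2 > 0" and
      PH: "\<forall>(z::real \<Rightarrow> real^'n) u r.
     (\<forall>t\<ge>0. (z has_vector_derivative (Dk k *v z t + u t)) (at t within {0..})) \<longrightarrow>
     (\<forall>t\<ge>0. norm (u t) \<le> K1 * exp (-\<gamma>*t) * r) \<longrightarrow>
     (\<forall>t\<ge>0. norm (z t) \<le> K2 * exp (-\<gamma>2*t) * (norm (z 0) + r))"
      using perturb[OF Dst[OF k(1)] K1 ga] by blast
    define K' where "K' = max K (K2 * (NL k + 1))"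
    define \<gamma>' where "\<gamma>' = min \<gamma> \<gamma>2"
    have K': "K' > 0" using K by (simp add: K'_def)
    have ga': "\<gamma>' > 0" using ga ga2 by (simp add: \<gamma>'_def)
    show ?case
    proof (rule exI[of _ K'], rule exI[of _ \<gamma>'], intro conjI K' ga' allI impI)
      fix X :: "real \<Rightarrow> real^'n^'m" and l :: nat and t :: real assume X: "sol X" and l: "?n - Suc d \<le> l" "l < ?n" and t: "t \<ge> 0"
      have expmono: "exp (-\<gamma>*t) \<le> exp (-\<gamma>'*t)" "exp (-\<gamma>2*t) \<le> exp (-\<gamma>'*t)"
        using t by (auto simp: \<gamma>'_def intro!: mult_right_mono)
      show "norm (Lf l (X t)) \<le> K' * exp (-\<gamma>'*t) * norm (X 0)"
      proof (cases "l = k")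
        case False
        then have "?n - d \<le> l" using l k by (auto simp: k_def)
        then have "norm (Lf l (X t)) \<le> K * exp (-\<gamma>*t) * norm (X 0)" using IH X l t by blast
        also have "\<dots> \<le> K' * exp (-\<gamma>'*t) * norm (X 0)"
          by (intro mult_right_mono mult_mono expmono) (use K K' in \<open>auto simp: K'_def\<close>)
        finally show ?thesis .
      next
        case True
        define u where "u t = c *\<^sub>R (\<Sum>l\<in>{k<..<?n}. b k l *\<^sub>R (G *v Lf l (X t)))" for t
        have zd: "\<forall>t\<ge>0. ((\<lambda>t. Lf k (X t)) has_vector_derivative (Dk k *v Lf k (X t) + u t)) (at t within {0..})"
        proof (intro allI impI)
          fix s :: real assume s: "s \<ge> 0"
          have "((\<lambda>t. Lf k (X t)) has_vector_derivative Lf k (coupled_rhs A F C c Lt (X s))) (at s within {0..})"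
            by (rule Lderiv) (use X s in \<open>simp add: sol_def\<close>)
          then show "((\<lambda>t. Lf k (X t)) has_vector_derivative (Dk k *v Lf k (X s) + u s)) (at s within {0..})"
            by (simp add: rhs[OF k(1)] u_def)
        qed
        have ub: "\<forall>t\<ge>0. norm (u t) \<le> K1 * exp (-\<gamma>*t) * norm (X 0)"
        proof (intro allI impI)
          fix t :: real assume t: "t \<ge> 0"
          have "norm (u t) \<le> \<bar>c\<bar> * (\<Sum>l\<in>{k<..<?n}. norm (b k l *\<^sub>R (G *v Lf l (X t))))"
          proof -
            have "norm (\<Sum>l\<in>{k<..<?n}. b k l *\<^sub>R (G *v Lf l (X t))) \<le> (\<Sum>l\<in>{k<..<?n}. norm (b k l *\<^sub>R (G *v Lf l (X t))))"
              by (rule norm_sum)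
            then show ?thesis unfolding u_def norm_scaleR by (intro mult_left_mono) simp_all
          qed
          also have "\<dots> \<le> \<bar>c\<bar> * (\<Sum>l\<in>{k<..<?n}. \<bar>b k l\<bar> * (NG * (K * exp (-\<gamma>*t) * norm (X 0))))"
          proof (intro mult_left_mono sum_mono)
            fix l assume l: "l \<in> {k<..<?n}"
            have "norm (G *v Lf l (X t)) \<le> norm (Lf l (X t)) * NG" by (rule NG(2))
            also have "\<dots> \<le> (K * exp (-\<gamma>*t) * norm (X 0)) * NG"
              using IH[OF X _ _ t, of l] l k NG by (intro mult_right_mono) auto
            finally show "norm (b k l *\<^sub>R (G *v Lf l (X t))) \<le> \<bar>b k l\<bar> * (NG * (K * exp (-\<gamma>*t) * norm (X 0)))"
              by (simp add: mult_left_mono mult.commute)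
          qed simp
          also have "\<dots> = \<bar>c\<bar> * S * NG * K * exp (-\<gamma>*t) * norm (X 0)"
            by (simp add: S_def sum_distrib_right sum_distrib_left mult_ac)
          also have "\<dots> \<le> K1 * exp (-\<gamma>*t) * norm (X 0)"
            by (intro mult_right_mono) (auto simp: K1_def)
          finally show "norm (u t) \<le> K1 * exp (-\<gamma>*t) * norm (X 0)" .
        qed
        have "norm (Lf k (X t)) \<le> K2 * exp (-\<gamma>2*t) * (norm (Lf k (X 0)) + norm (X 0))"
          using PH zd ub t by blast
        also have "\<dots> \<le> K2 * exp (-\<gamma>2*t) * ((NL k + 1) * norm (X 0))"
          using Lbound[of k "X 0"] K2 by (intro mult_left_mono) (auto simp: algebra_simps)
        also have "\<dots> = (K2 * (NL k + 1)) * exp (-\<gamma>2*t) * norm (X 0)" by simp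
        also have "\<dots> \<le> K' * exp (-\<gamma>'*t) * norm (X 0)"
          by (intro mult_right_mono mult_mono expmono) (use K K' in \<open>auto simp: K'_def\<close>)
        finally show ?thesis using True by simp
      qed
    qed
  qed
  obtain K \<gamma> where K: "K > 0" and ga: "\<gamma> > 0" and
    BD: "\<And>X l t. sol X \<Longrightarrow> l < ?n \<Longrightarrow> t \<ge> 0 \<Longrightarrow> norm (Lf l (X t)) \<le> K * exp (-\<gamma>*t) * norm (X 0)"
    using claim[of ?n] by auto
  define SV where "SV = (\<Sum>i\<in>UNIV. \<Sum>k<?n. \<bar>V i k\<bar>)"
  have SV0: "SV \<ge> 0" by (simp add: SV_def sum_nonneg)
  have recon: "Y $ i = (\<Sum>k<?n. V i k *\<^sub>R Lf k Y)" for Y :: "real^'n^'m" and i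
  proof -
    have "(\<Sum>k<?n. V i k *\<^sub>R Lf k Y) = (\<Sum>j\<in>UNIV. (\<Sum>k<?n. V i k * W k j) *\<^sub>R Y $ j)"
      by (simp add: Lf_def scaleR_sum_right scaleR_sum_left sum.swap[of _ "{..<?n}"])
    also have "\<dots> = (\<Sum>j\<in>UNIV. (if i = j then Y $ j else 0))" using VW by (intro sum.cong) auto
    also have "\<dots> = Y $ i" by simp
    finally show ?thesis by simp
  qed
  show ?thesis unfolding exp_stable_def
  proof (rule exI[of _ "SV * K + 1"], rule exI[of _ \<gamma>], intro conjI allI impI)
    show "SV * K + 1 > 0" using SV0 K by (simp add: add_nonneg_pos)
    show "\<gamma> > 0" by (rule ga)
    fix X :: "real \<Rightarrow> real^'n^'m" and t :: real
    assume X: "\<forall>t\<ge>0. (X has_vector_derivative coupled_rhs A F C c Lt (X t)) (at t within {0..})" and t: "t \<ge> 0"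
    have sX: "sol X" using X by (simp add: sol_def)
    have "norm (X t) \<le> (\<Sum>i\<in>UNIV. norm (X t $ i))" by (rule norm_le_sum_vec)
    also have "\<dots> \<le> (\<Sum>i\<in>UNIV. \<Sum>k<?n. \<bar>V i k\<bar> * (K * exp (-\<gamma>*t) * norm (X 0)))"
    proof (intro sum_mono)
      fix i
      have "norm (X t $ i) \<le> (\<Sum>k<?n. norm (V i k *\<^sub>R Lf k (X t)))"
        by (subst recon) (rule norm_sum)
      also have "\<dots> \<le> (\<Sum>k<?n. \<bar>V i k\<bar> * (K * exp (-\<gamma>*t) * norm (X 0)))"
        using BD[OF sX _ t] by (intro sum_mono) (simp add: mult_left_mono)
      finally show "norm (X t $ i) \<le> (\<Sum>k<?n. \<bar>V i k\<bar> * (K * exp (-\<gamma>*t) * norm (X 0)))" .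
    qed
    also have "\<dots> = SV * K * exp (-\<gamma>*t) * norm (X 0)"
      by (simp add: SV_def sum_distrib_right sum_distrib_left mult_ac)
    also have "\<dots> \<le> (SV * K + 1) * exp (-\<gamma>*t) * norm (X 0)"
      by (intro mult_right_mono) auto
    finally show "norm (X t) \<le> (SV * K + 1) * exp (- \<gamma> * t) * norm (X 0)" .
  qed
qed

end
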